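(* Let $n>1$ and $m$ be integers with $0<m<n$. Then $$\left|\mathcal{F}(n,m)\right|=|\mathcal{F}_{n-m}^m|+|\mathcal{F}^{n-m}_m|-1,$$ and $$\left|\mathcal{F}(n,m)\right|-2=\sum_{d\geq1}\overline{\mu}(d)\cdot\left\lfloor\tfrac md\right\rfloor\cdot\left\lfloor\tfrac{n-m}{d}\right\rfloor .$$ In particular, for every positive integer $t$, $$\sum_{d\geq1}\overline{\mu}(d)\cdot\left\lfloor\tfrac td\right\rfloor^2=\left|\mathcal{F}(2t,t)\right|-2=2\left|\mathcal{F}_t\right|-3 .$$
   Context: For an integer $N\geq 1$, the Farey sequence $\mathcal{F}_N$ is the ascending sequence of irreducible fractions $\tfrac hk$ (with $h\ge0$, $k\ge1$, $\gcd(h,k)=1$) such that $\tfrac01\leq\tfrac hk\leq\tfrac11$ and $1\leq k\leq N$. For integers $N\ge1$ and $M$, $\mathcal{F}_N^M:=\left(\tfrac hk\in\mathcal{F}_N:\ h\leq M\right)$. For $0<m<n$, $\mathcal{F}(n,m):=\left(\tfrac hk\in\mathcal{F}_n:\ h\leq m,\ k-h\leq n-m\right)$ (the Farey subsequence associated with an element of rank $m$ in the Boolean lattice of rank $n$). $\overline{\mu}$ denotes the number-theoretic Möbius function, and $|\cdot|$ denotes the number of terms of a sequence. *)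

theory Defs
  imports "HOL-Computational_Algebra.Computational_Algebra"
begin

text \<open>Fractions h/k are represented by pairs (h,k) of naturals in lowest terms.\<close>

definition farey :: "nat \<Rightarrow> (nat \<times> nat) set" where
  "farey N = {(h, k). 1 \<le> k \<and> k \<le> N \<and> h \<le> k \<and> coprime h k}"

definition farey_upto :: "nat \<Rightarrow> int \<Rightarrow> (nat \<times> nat) set" where
  "farey_upto N M = {(h, k) \<in> farey N. int h \<le> M}"

definition farey_bool :: "nat \<Rightarrow> nat \<Rightarrow> (nat \<times> nat) set" where
  "farey_bool n m = {(h, k) \<in> farey n. h \<le> m \<and> k - h \<le> n - m}"

definition moebius :: "nat \<Rightarrow> int" where
  "moebius d = (if d = 0 then 0 else if squarefree d then (-1) ^ card (prime_factors d) else 0)"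

end

theory Submission imports Defs begin

lemma prod_primes_pf:
  fixes S :: "nat set"
  assumes "finite S" "\<And>p. p \<in> S \<Longrightarrow> prime p"
  shows "prime_factors (\<Prod>S) = S" "\<Prod>S \<noteq> 0" "squarefree (\<Prod>S)"
proof -
  have nz: "0 \<notin> id ` S" using assms(2) by force
  show "prime_factors (\<Prod>S) = S"
    using prime_factors_prod[OF assms(1) nz] assms(2)
    by (auto simp: prime_factorization_prime)
  show "\<Prod>S \<noteq> 0" using nz assms(1) by auto
  show "squarefree (\<Prod>S)"
    using squarefree_prod_coprime[of S id] assms(2)
    by (simp add: primes_coprime squarefree_prime)
qed

lemma sqf_eq_prod:
  fixes d :: nat
  assumes "d > 0" "squarefree d"
  shows "\<Prod>(prime_factors d) = d"
proof -
  have "(\<Prod>p \<in> prime_factors d. p ^ multiplicity p d) = d"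
    using prod_prime_factors[of d] assms by simp
  moreover have "(\<Prod>p \<in> prime_factors d. p ^ multiplicity p d) = (\<Prod>p \<in> prime_factors d. p)"
    using squarefree_factorial_semiring'[of d] assms by (intro prod.cong) auto
  ultimately show ?thesis by simp
qed

lemma prod_pf_dvd:
  fixes g :: nat
  assumes "g > 0"
  shows "\<Prod>(prime_factors g) dvd g"
proof -
  have "(\<Prod>p \<in> prime_factors g. p) dvd (\<Prod>p \<in> prime_factors g. p ^ multiplicity p g)"
    by (intro prod_dvd_prod) (auto simp: prime_factors_multiplicity)
  thus ?thesis using prod_prime_factors[of g] assms by simp
qed

lemma moebius_sum:
  fixes g :: nat
  assumes "g > 0"
  shows "(\<Sum>d | d dvd g. moebius d) = (if g = 1 then 1 else 0)"
proof -
  define P where "P = prime_factors g"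
  have fin: "finite {d. d dvd g}" using assms by simp
  have "(\<Sum>d | d dvd g. moebius d) = (\<Sum>d \<in> {d. d dvd g \<and> squarefree d}. moebius d)"
    using fin by (intro sum.mono_neutral_right) (auto simp: moebius_def)
  also have "\<dots> = (\<Sum>S \<in> Pow P. moebius (\<Prod>S))"
  proof (rule sum.reindex_bij_betw[symmetric])
    show "bij_betw Prod (Pow P) {d. d dvd g \<and> squarefree d}"
    proof (rule bij_betwI[where g = prime_factors])
      show "Prod \<in> Pow P \<rightarrow> {d. d dvd g \<and> squarefree d}"
      proof
        fix S assume S: "S \<in> Pow P"
        have fS: "finite S" using S P_def finite_subset by auto
        have pS: "\<And>p. p \<in> S \<Longrightarrow> prime p" using S P_def by auto
        have "\<Prod>S dvd \<Prod>P" using S P_def by (intro prod_dvd_prod_subset) auto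
        also have "\<dots> dvd g" using prod_pf_dvd assms P_def by simp
        finally show "\<Prod>S \<in> {d. d dvd g \<and> squarefree d}"
          using prod_primes_pf[OF fS pS] by simp
      qed
      show "prime_factors \<in> {d. d dvd g \<and> squarefree d} \<rightarrow> Pow P"
        using assms P_def by (auto simp: prime_factors_dvd intro: dvd_trans)
      show "prime_factors (\<Prod>S) = S" if "S \<in> Pow P" for S
        using prod_primes_pf[of S] that P_def finite_subset by auto
      show "\<Prod>(prime_factors d) = d" if "d \<in> {d. d dvd g \<and> squarefree d}" for d
        using sqf_eq_prod[of d] that assms by (auto intro: Nat.gr0I)
    qed
  qed
  also have "\<dots> = (\<Sum>S \<in> Pow P. (-1) ^ card S)"
  proof (intro sum.cong refl)
    fix S assume S: "S \<in> Pow P"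
    have fS: "finite S" using S P_def finite_subset by auto
    have pS: "\<And>p. p \<in> S \<Longrightarrow> prime p" using S P_def by auto
    show "moebius (\<Prod>S) = (-1) ^ card S"
      using prod_primes_pf[OF fS pS] by (simp add: moebius_def)
  qed
  also have "\<dots> = (\<Prod>p\<in>P. (1::int) - 1)"
    using prod_diff_conv_sum[of P "\<lambda>_. 1::int" "\<lambda>_. 1"] P_def by simp
  also have "\<dots> = (if g = 1 then 1 else 0)"
  proof -
    have "P = {} \<longleftrightarrow> g = 1"
      using prime_factorization_empty_iff[of g] assms P_def by auto
    thus ?thesis using P_def by (auto simp: card_gt_0_iff)
  qed
  finally show ?thesis .
qed

lemma count_mult: "(\<Sum>a\<in>{1..m}. of_bool (d dvd a) :: int) = int (m div d)"
proof (induction m)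
  case 0 then show ?case by simp
next
  case (Suc m)
  then show ?case by (simp add: sum.cl_ivl_Suc div_Suc dvd_eq_mod_eq_0)
qed

lemma sum_prod_sep:
  "(\<Sum>x\<in>A\<times>B. (f (fst x) :: int) * g (snd x)) = sum f A * sum g B"
  by (simp add: sum_product sum.cartesian_product case_prod_beta)

lemma coprime_ind:
  fixes a b N :: nat
  assumes "1 \<le> a" "a \<le> N"
  shows "(of_bool (coprime a b) :: int) = (\<Sum>d\<in>{1..N}. moebius d * of_bool (d dvd a) * of_bool (d dvd b))"
proof -
  have g: "gcd a b > 0" using assms by simp
  have "{1..N} \<inter> {d. d dvd a \<and> d dvd b} = {d. d dvd gcd a b}"
  proof -
    have "d dvd a \<Longrightarrow> 1 \<le> d \<and> d \<le> N" for d
      using assms dvd_imp_le[of d a] by (cases "d = 0") auto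
    thus ?thesis by auto
  qed
  hence "(\<Sum>d\<in>{1..N}. moebius d * of_bool (d dvd a) * of_bool (d dvd b))
      = (\<Sum>d | d dvd gcd a b. moebius d)"
    by (simp add: mult.assoc of_bool_conj[symmetric] del: of_bool_conj)
  also have "\<dots> = of_bool (coprime a b)"
    using moebius_sum[OF g] by (simp add: coprime_iff_gcd_eq_1)
  finally show ?thesis by simp
qed

lemma coprime_count:
  fixes m m' N :: nat
  assumes "m \<le> N"
  shows "int (card {(a,b). a \<in> {1..m} \<and> b \<in> {1..m'} \<and> coprime a b})
        = (\<Sum>d\<in>{1..N}. moebius d * int (m div d) * int (m' div d))"
proof -
  have "int (card {(a,b). a \<in> {1..m} \<and> b \<in> {1..m'} \<and> coprime a b})
      = (\<Sum>x\<in>{1..m}\<times>{1..m'}. of_bool (coprime (fst x) (snd x)))"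
  proof -
    have "({1..m}\<times>{1..m'}) \<inter> {x. coprime (fst x) (snd x)} = {(a,b). a \<in> {1..m} \<and> b \<in> {1..m'} \<and> coprime a b}"
      by auto
    thus ?thesis by simp
  qed
  also have "\<dots> = (\<Sum>x\<in>{1..m}\<times>{1..m'}. \<Sum>d\<in>{1..N}. moebius d * of_bool (d dvd fst x) * of_bool (d dvd snd x))"
    using assms by (intro sum.cong refl coprime_ind) auto
  also have "\<dots> = (\<Sum>d\<in>{1..N}. \<Sum>x\<in>{1..m}\<times>{1..m'}. moebius d * of_bool (d dvd fst x) * of_bool (d dvd snd x))"
    by (rule sum.swap)
  also have "\<dots> = (\<Sum>d\<in>{1..N}. moebius d * int (m div d) * int (m' div d))"
  proof (intro sum.cong refl)
    fix d
    have "(\<Sum>x\<in>{1..m}\<times>{1..m'}. moebius d * of_bool (d dvd fst x) * of_bool (d dvd snd x))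
        = moebius d * ((\<Sum>a\<in>{1..m}. of_bool (d dvd a)) * (\<Sum>b\<in>{1..m'}. of_bool (d dvd b)))"
      by (simp only: mult.assoc sum_distrib_left[symmetric]
           sum_prod_sep[of "\<lambda>a. of_bool (d dvd a)" "\<lambda>b. of_bool (d dvd b)" "{1..m}" "{1..m'}"])
    also have "\<dots> = moebius d * int (m div d) * int (m' div d)"
      by (simp only: count_mult mult.assoc)
    finally show "(\<Sum>x\<in>{1..m}\<times>{1..m'}. moebius d * of_bool (d dvd fst x) * of_bool (d dvd snd x))
        = moebius d * int (m div d) * int (m' div d)" .
  qed
  finally show ?thesis .
qed

definition C :: "nat \<Rightarrow> nat \<Rightarrow> (nat \<times> nat) set" where
  "C m m' = {(a,b). a \<le> m \<and> b \<le> m' \<and> coprime a b}"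

lemma finC: "finite (C m m')"
  by (rule finite_subset[of _ "{..m}\<times>{..m'}"]) (auto simp: C_def)

lemma coprime_sub: "h \<le> (k::nat) \<Longrightarrow> coprime h (k - h) \<longleftrightarrow> coprime h k"
proof -
  assume "h \<le> k"
  hence "k = h + (k - h)" by simp
  hence "gcd h k = gcd h (k - h)" by (metis gcd_add2)
  thus ?thesis by (simp add: coprime_iff_gcd_eq_1)
qed

lemma L1:
  assumes "m \<le> n"
  shows "card (farey_bool n m) = card (C m (n - m))"
proof -
  have "farey_bool n m = (\<lambda>(a,b). (a, a + b)) ` C m (n - m)"
  proof (rule set_eqI, rule iffI)
    fix x assume x: "x \<in> farey_bool n m"
    obtain h k where hk: "x = (h,k)" by force
    with x have "(h, k - h) \<in> C m (n - m)" and "x = (\<lambda>(a,b). (a, a + b)) (h, k - h)"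
      by (auto simp: farey_bool_def farey_def C_def coprime_sub)
    thus "x \<in> (\<lambda>(a,b). (a, a + b)) ` C m (n - m)" by blast
  next
    fix x assume "x \<in> (\<lambda>(a,b). (a, a + b)) ` C m (n - m)"
    then obtain a b where ab: "(a,b) \<in> C m (n-m)" "x = (a, a+b)" by auto
    have "a + b \<noteq> 0" using ab(1) by (auto simp: C_def)
    moreover have "coprime a (a + b)" using ab(1)
      by (auto simp: C_def coprime_iff_gcd_eq_1)
    ultimately show "x \<in> farey_bool n m" using ab assms
      by (auto simp: farey_bool_def farey_def C_def)
  qed
  moreover have "inj_on (\<lambda>(a,b). (a, a + b)) (C m (n - m))"
    by (auto simp: inj_on_def)
  ultimately show ?thesis by (simp add: card_image)
qed

lemma cop_pos1: "coprime (a::nat) b \<Longrightarrow> a \<noteq> 1 \<Longrightarrow> 1 \<le> b"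
  by (cases b) auto
lemma cop_pos2: "coprime (a::nat) b \<Longrightarrow> b \<noteq> 1 \<Longrightarrow> 1 \<le> a"
  by (cases a) auto

lemma L2:
  assumes "1 \<le> m" "1 \<le> m'"
  shows "card (C m m') = card {(a,b). a \<in> {1..m} \<and> b \<in> {1..m'} \<and> coprime a b} + 2"
proof -
  let ?Q = "{(a,b). a \<in> {1..m} \<and> b \<in> {1..m'} \<and> coprime a b}"
  have "C m m' = insert (0,1) (insert (1,0) ?Q)"
    using assms by (auto simp: C_def dest: cop_pos1 cop_pos2)
  moreover have "finite ?Q"
    by (rule finite_subset[of _ "{1..m}\<times>{1..m'}"]) auto
  ultimately show ?thesis by simp
qed

lemma L3:
  assumes "1 \<le> m" "1 \<le> m'"
  shows "card (C m m') + 1 = card (farey_upto m' (int m)) + card (farey_upto m (int m'))"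
proof -
  let ?A = "farey_upto m' (int m)"
  let ?B = "prod.swap ` farey_upto m (int m')"
  have fA: "finite ?A"
    by (rule finite_subset[of _ "{..m'}\<times>{..m'}"]) (auto simp: farey_upto_def farey_def)
  have fB0: "finite (farey_upto m (int m'))"
    by (rule finite_subset[of _ "{..m}\<times>{..m}"]) (auto simp: farey_upto_def farey_def)
  have cB: "card ?B = card (farey_upto m (int m'))"
    by (rule card_image) (auto simp: inj_on_def)
  have U: "?A \<union> ?B = C m m'"
  proof (rule set_eqI)
    fix x :: "nat \<times> nat"
    obtain a b where x: "x = (a,b)" by force
    have "coprime a b \<Longrightarrow> a \<noteq> 1 \<Longrightarrow> 1 \<le> b" by (cases b) auto
    moreover have "coprime a b \<Longrightarrow> b \<noteq> 1 \<Longrightarrow> 1 \<le> a" by (cases a) auto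
    ultimately show "x \<in> ?A \<union> ?B \<longleftrightarrow> x \<in> C m m'"
      unfolding x by (auto simp: farey_upto_def farey_def C_def coprime_commute)
  qed
  have I: "?A \<inter> ?B = {(1,1)}"
  proof (rule set_eqI)
    fix x :: "nat \<times> nat"
    obtain a b where x: "x = (a,b)" by force
    have "coprime a a \<longleftrightarrow> a = 1" by simp
    thus "x \<in> ?A \<inter> ?B \<longleftrightarrow> x \<in> {(1,1)}"
      unfolding x using assms by (auto simp: farey_upto_def farey_def)
  qed
  have "card (?A \<union> ?B) + card (?A \<inter> ?B) = card ?A + card ?B"
    using card_Un_Int[OF fA finite_imageI[OF fB0, of prod.swap]] by simp
  thus ?thesis using U I cB by simp
qed

lemma part1:
  fixes n m :: nat
  assumes "n > 1" "0 < m" "m < n"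
  shows "int (card (farey_bool n m))
        = int (card (farey_upto (n - m) (int m))) + int (card (farey_upto m (int (n - m)))) - 1
    \<and> int (card (farey_bool n m)) - 2
        = (\<Sum>d\<in>{1..n}. moebius d * int (m div d) * int ((n - m) div d))"
proof
  have a: "card (farey_bool n m) = card (C m (n - m))" using L1 assms by simp
  have b: "card (C m (n-m)) + 1 = card (farey_upto (n - m) (int m)) + card (farey_upto m (int (n - m)))"
    using L3[of m "n - m"] assms by simp
  show "int (card (farey_bool n m))
        = int (card (farey_upto (n - m) (int m))) + int (card (farey_upto m (int (n - m)))) - 1"
    using a b by linarith
  have c: "card (C m (n - m)) = card {(a,b). a \<in> {1..m} \<and> b \<in> {1..n-m} \<and> coprime a b} + 2"
    using L2[of m "n - m"] assms by simp
  show "int (card (farey_bool n m)) - 2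
        = (\<Sum>d\<in>{1..n}. moebius d * int (m div d) * int ((n - m) div d))"
    using a c coprime_count[of m n "n - m"] assms by simp
qed

theorem mainTheorem4:
  "(\<forall>n m :: nat. n > 1 \<and> 0 < m \<and> m < n \<longrightarrow>
      int (card (farey_bool n m))
        = int (card (farey_upto (n - m) (int m))) + int (card (farey_upto m (int (n - m)))) - 1
    \<and> int (card (farey_bool n m)) - 2
        = (\<Sum>d\<in>{1..n}. moebius d * int (m div d) * int ((n - m) div d)))
   \<and> (\<forall>t :: nat. t > 0 \<longrightarrow>
      (\<Sum>d\<in>{1..t}. moebius d * int (t div d) ^ 2) = int (card (farey_bool (2 * t) t)) - 2
    \<and> int (card (farey_bool (2 * t) t)) - 2 = 2 * int (card (farey t)) - 3)"
proof (intro conjI allI impI)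
  fix n m :: nat
  assume "1 < n \<and> 0 < m \<and> m < n"
  thus "int (card (farey_bool n m))
        = int (card (farey_upto (n - m) (int m))) + int (card (farey_upto m (int (n - m)))) - 1"
    "int (card (farey_bool n m)) - 2
        = (\<Sum>d\<in>{1..n}. moebius d * int (m div d) * int ((n - m) div d))"
    using part1[of n m] by auto
next
  fix t :: nat assume t: "t > 0"
  have P: "int (card (farey_bool (2*t) t))
        = int (card (farey_upto t (int t))) + int (card (farey_upto t (int t))) - 1
    \<and> int (card (farey_bool (2*t) t)) - 2
        = (\<Sum>d\<in>{1..2*t}. moebius d * int (t div d) * int (t div d))"
    using part1[of "2*t" t] t by simp
  have "(\<Sum>d\<in>{1..2*t}. moebius d * int (t div d) * int (t div d))
      = (\<Sum>d\<in>{1..t}. moebius d * int (t div d) * int (t div d))"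
    by (rule sum.mono_neutral_right) auto
  thus "(\<Sum>d\<in>{1..t}. moebius d * int (t div d) ^ 2) = int (card (farey_bool (2 * t) t)) - 2"
    using P by (simp add: power2_eq_square mult.assoc)
  have "farey_upto t (int t) = farey t"
    by (auto simp: farey_upto_def farey_def)
  thus "int (card (farey_bool (2 * t) t)) - 2 = 2 * int (card (farey t)) - 3"
    using P by simp
qed
end
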